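(* Let $\mu>0$, $\tau>0$, $\alpha\in(0,1)$, and let $G_\alpha(t)$ be the relaxation modulus of the Andrade model, i.e. the function whose Laplace transform is $$\tilde G_\alpha(s)=\frac{\mu\,\tau}{s\,\tau+\Gamma(\alpha+1)(s\,\tau)^{1-\alpha}+1}.$$ Then $\lim_{t\to0^+}G_\alpha(t)=\mu$ and, as $t\to0^+$, $$G_\alpha(t)\approx\mu\left[1-\left(\frac{t}{\tau}\right)^{\alpha}\right].$$
   Context: Here $\approx$ denotes the leading-order asymptotic behaviour as $t\to0^+$ (up to terms of lower order than $(t/\tau)^\alpha$). Background: in the Andrade model the creep compliance is $J_\alpha(t)=\frac{1}{\mu}\left[1+(t/\tau)^\alpha+t/\tau\right]$ and the relaxation modulus satisfies $\tilde J_\alpha(s)\tilde G_\alpha(s)=1/s^2$, equivalently the Volterra equation $G_\alpha(t)=\mu-\frac{1}{\tau}\int_0^t\left[1+\alpha\left(\frac{t-x}{\tau}\right)^{\alpha-1}\right]G_\alpha(x)\,dx$. *)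

theory Defs
  imports "HOL-Analysis.Analysis" "HOL-Library.Landau_Symbols"
begin

definition has_laplace :: "(real \<Rightarrow> real) \<Rightarrow> real \<Rightarrow> real \<Rightarrow> bool" where
  "has_laplace G s L \<longleftrightarrow>
     (\<lambda>t. exp (- s * t) * G t) absolutely_integrable_on {0<..} \<and>
     ((\<lambda>t. exp (- s * t) * G t) has_integral L) {0<..}"

end

theory Submission
  imports Defs "HOL-Real_Asymp.Real_Asymp"
begin


lemma gamma_real_open:
  assumes "x > (0::real)"
  shows "((\<lambda>t. t powr (x - 1) / exp t) has_integral Gamma x) {0<..}"
proof -
  have "((\<lambda>t. t powr (x - 1) / exp t) has_integral Gamma x) {0..}"
    by (rule Gamma_integral_real) fact
  hence "((\<lambda>t. if t \<in> {0<..} then t powr (x - 1) / exp t else 0) has_integral Gamma x) {0..}"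
    by (rule has_integral_spike [of "{0}", rotated 2]) auto
  also have "?this = ?thesis"
    by (subst has_integral_restrict) auto
  finally show ?thesis .
qed

lemma laplace_powr:
  fixes \<beta> s :: real
  assumes "\<beta> > -1" "s > 0"
  shows "((\<lambda>t. exp (- s * t) * t powr \<beta>) has_integral (Gamma (\<beta> + 1) / s powr (\<beta> + 1))) {0<..}"
    "(\<lambda>t. exp (- s * t) * t powr \<beta>) absolutely_integrable_on {0<..}"
proof -
  define f where "f = (\<lambda>t::real. t powr \<beta> / exp t)"
  have fi: "(f has_integral Gamma (\<beta>+1)) {0<..}"
    using gamma_real_open[of "\<beta>+1"] assms by (simp add: f_def)
  have fa: "f absolutely_integrable_on {0<..}"
    using fi by (intro nonnegative_absolutely_integrable_1) (auto simp: f_def)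
  have img: "(\<lambda>x. s * x) ` {0<..} = ({0<..}::real set)"
  proof (rule set_eqI, rule iffI)
    fix y :: real assume "y \<in> {0<..}"
    then show "y \<in> (\<lambda>x. s * x) ` {0<..}" using assms
      by (intro image_eqI[of _ _ "y / s"]) auto
  qed (use assms in auto)
  have cv: "(\<lambda>x. \<bar>s\<bar> * f (s * x)) absolutely_integrable_on {0<..} \<and>
           integral {0<..} (\<lambda>x. \<bar>s\<bar> * f (s * x)) = Gamma (\<beta>+1)"
    using has_absolute_integral_change_of_variables_1'[of "{0<..}" "\<lambda>x. s * x" "\<lambda>_. s" f "Gamma (\<beta>+1)"]
      fa fi assms img
    by (auto intro!: derivative_eq_intros simp: inj_on_def has_integral_iff)
  define c where "c = 1 / s powr (\<beta> + 1)"
  have eq: "exp (- s * t) * t powr \<beta> = c * (\<bar>s\<bar> * f (s * t))" if "t \<in> {0<..}" for t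
    using that assms by (simp add: c_def f_def powr_mult powr_add exp_minus field_simps)
  have h1: "((\<lambda>x. \<bar>s\<bar> * f (s * x)) has_integral Gamma (\<beta>+1)) {0<..}"
    using cv set_lebesgue_integral_eq_integral(1) absolutely_integrable_on_def
    by (metis has_integral_integral)
  have "((\<lambda>x. c * (\<bar>s\<bar> * f (s * x))) has_integral c * Gamma (\<beta>+1)) {0<..}"
    by (rule has_integral_mult_right[OF h1])
  then show "((\<lambda>t. exp (- s * t) * t powr \<beta>) has_integral (Gamma (\<beta> + 1) / s powr (\<beta> + 1))) {0<..}"
    using eq by (subst has_integral_cong) (auto simp: c_def)
  have "(\<lambda>x. c * (\<bar>s\<bar> * f (s * x))) absolutely_integrable_on {0<..}"
    using cv absolutely_integrable_scaleR_left[where c=c] by simp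
  then show "(\<lambda>t. exp (- s * t) * t powr \<beta>) absolutely_integrable_on {0<..}"
    by (rule absolutely_integrable_spike[of _ _ "{}"]) (use eq in auto)
qed



lemma gamma_lower:
  fixes y \<beta> :: real
  assumes "y > 0" "\<beta> \<ge> 0"
  shows "y powr \<beta> * exp (- y) \<le> exp 1 * Gamma (\<beta> + 1)"
proof -
  let ?f = "\<lambda>t::real. t powr \<beta> / exp t"
  have gi: "(?f has_integral Gamma (\<beta>+1)) {0..}"
    using Gamma_integral_real[of "\<beta>+1"] assms by simp
  have cont: "continuous_on {y..y+1} ?f"
    using assms by (intro continuous_intros) auto
  have int1: "?f integrable_on {y..y+1}"
    using cont integrable_continuous_interval by blast
  have "integral {y..y+1} ?f \<le> integral {0..} ?f"
    using assms gi int1 by (intro integral_subset_le) auto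
  also have "\<dots> = Gamma (\<beta>+1)" using gi by (simp add: has_integral_iff)
  finally have le1: "integral {y..y+1} ?f \<le> Gamma (\<beta>+1)" .
  have "integral {y..y+1} (\<lambda>t. y powr \<beta> * exp (- y - 1)) \<le> integral {y..y+1} ?f"
  proof (rule integral_le)
    show "(\<lambda>t. y powr \<beta> * exp (- y - 1)) integrable_on {y..y+1}" by (intro integrable_continuous_interval continuous_intros)
    show "?f integrable_on {y..y+1}" by fact
    fix t assume t: "t \<in> {y..y+1}"
    have "y powr \<beta> \<le> t powr \<beta>" using t assms by (intro powr_mono2) auto
    moreover have "exp (- y - 1) \<le> exp (- t)" using t by simp
    ultimately have "y powr \<beta> * exp (- y - 1) \<le> t powr \<beta> * exp (- t)"
      by (intro mult_mono) auto
    then show "y powr \<beta> * exp (- y - 1) \<le> ?f t" by (simp add: exp_minus field_simps)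
  qed
  then have "y powr \<beta> * exp (- y - 1) \<le> Gamma (\<beta>+1)" using le1 by simp
  then have "exp 1 * (y powr \<beta> * exp (- y - 1)) \<le> exp 1 * Gamma (\<beta>+1)" by simp
  moreover have "exp 1 * (y powr \<beta> * exp (- y - 1)) = y powr \<beta> * exp (- y)"
    by (simp add: exp_diff exp_minus field_simps)
  ultimately show ?thesis by simp
qed

lemma term_bound:
  fixes t \<sigma> \<beta> :: real
  assumes "t > 0" "\<sigma> > 0" "\<beta> \<ge> 0"
  shows "t powr \<beta> / Gamma (\<beta> + 1) \<le> exp 1 * exp (\<sigma> * t) * \<sigma> powr (- \<beta>)"
proof -
  have g: "Gamma (\<beta> + 1) > 0" using assms by (intro Gamma_real_pos) auto
  have "(\<sigma> * t) powr \<beta> * exp (- (\<sigma> * t)) \<le> exp 1 * Gamma (\<beta> + 1)"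
    using assms by (intro gamma_lower) auto
  then have "\<sigma> powr \<beta> * t powr \<beta> \<le> exp 1 * Gamma (\<beta> + 1) * exp (\<sigma> * t)"
    using assms by (simp add: powr_mult exp_minus field_simps)
  then have "t powr \<beta> \<le> exp 1 * Gamma (\<beta> + 1) * exp (\<sigma> * t) * \<sigma> powr (- \<beta>)"
    using assms by (simp add: powr_minus field_simps)
  then show ?thesis using g by (simp add: field_simps)
qed



lemma lerch_pos:
  fixes D :: "real \<Rightarrow> real" and s0 t0 :: real
  assumes cont: "continuous_on {0<..} D"
    and ai: "(\<lambda>t. exp (- s0 * t) * D t) absolutely_integrable_on {0<..}"
    and z: "\<And>n::nat. ((\<lambda>t. exp (- (s0 + real n) * t) * D t) has_integral 0) {0<..}"
    and t0: "t0 > 0" and Dt0: "D t0 > 0"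
  shows False
proof -
  obtain d where d: "d > 0" "\<And>t. t \<in> {0<..} \<Longrightarrow> dist t t0 < d \<Longrightarrow> dist (D t) (D t0) < D t0"
    using cont t0 Dt0 unfolding continuous_on_iff by (metis greaterThan_iff)
  define \<delta> where "\<delta> = min d t0"
  have \<delta>: "\<delta> > 0" "\<delta> \<le> t0" using d t0 by (auto simp: \<delta>_def)
  have Dpos: "D t > 0" if "\<bar>t - t0\<bar> < \<delta>" for t
  proof -
    have "t > 0" using that \<delta> by auto
    moreover have "dist t t0 < d" using that by (simp add: dist_real_def \<delta>_def)
    ultimately have "dist (D t) (D t0) < D t0" using d by auto
    then show ?thesis by (simp add: dist_real_def)
  qed
  define x0 where "x0 = exp (- t0)"
  define r where "r = min (x0 - exp (- (t0 + \<delta>))) (exp (- (t0 - \<delta>)) - x0)"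
  have r: "r > 0" using \<delta> by (simp add: r_def x0_def)
  define \<psi> where "\<psi> = (\<lambda>x::real. max 0 (r - \<bar>x - x0\<bar>))"
  define \<phi> where "\<phi> = (\<lambda>t. \<psi> (exp (- t)))"
  have \<phi>nn: "\<phi> t \<ge> 0" for t by (simp add: \<phi>_def \<psi>_def)
  have \<phi>le: "\<phi> t \<le> r" for t using r by (simp add: \<phi>_def \<psi>_def)
  have \<phi>pos: "\<bar>t - t0\<bar> < \<delta>" if "\<phi> t > 0" for t
  proof (rule ccontr)
    assume "\<not> \<bar>t - t0\<bar> < \<delta>"
    then consider "t \<ge> t0 + \<delta>" | "t \<le> t0 - \<delta>" by linarith
    then have "\<bar>exp (- t) - x0\<bar> \<ge> r"
    proof cases
      case 1
      then have a: "exp (- t) \<le> exp (- (t0 + \<delta>))" by (subst exp_le_cancel_iff) linarith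
      have b: "r \<le> x0 - exp (- (t0 + \<delta>))" by (simp add: r_def)
      from a b show ?thesis by linarith
    next
      case 2
      then have a: "exp (- t) \<ge> exp (- (t0 - \<delta>))" by (subst exp_le_cancel_iff) linarith
      have b: "r \<le> exp (- (t0 - \<delta>)) - x0" by (simp add: r_def)
      from a b show ?thesis by linarith
    qed
    then have "\<phi> t = 0" by (simp add: \<phi>_def \<psi>_def)
    with that show False by simp
  qed
  have \<phi>D: "\<phi> t * D t \<ge> 0" for t
  proof (cases "\<phi> t > 0")
    case True then show ?thesis using Dpos[OF \<phi>pos[OF True]] by simp
  next
    case False then have "\<phi> t = 0" using \<phi>nn[of t] by simp
    then show ?thesis by simp
  qed
  have \<phi>t0: "\<phi> t0 = r" using r by (simp add: \<phi>_def \<psi>_def x0_def)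
  have \<psi>cont: "continuous_on A \<psi>" for A by (unfold \<psi>_def) (intro continuous_intros)
  have \<phi>cont: "continuous_on A \<phi>" for A
    unfolding \<phi>_def by (rule continuous_on_compose2[OF \<psi>cont[of UNIV]]) (auto intro!: continuous_intros)
  define F where "F = (\<lambda>t. \<phi> t * (exp (- s0 * t) * D t))"
  have Fai: "F absolutely_integrable_on {0<..}"
    unfolding F_def
  proof (rule absolutely_integrable_bounded_measurable_product_real[OF _ _ _ ai])
    show "\<phi> \<in> borel_measurable (lebesgue_on {0<..})"
      by (rule continuous_imp_measurable_on_sets_lebesgue[OF \<phi>cont]) auto
    show "bounded (\<phi> ` {0<..})" unfolding bounded_iff
      using \<phi>nn \<phi>le by (intro exI[of _ r]) (auto simp: abs_of_nonneg)
  qed auto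
  have Fint: "F integrable_on {0<..}" using Fai by (rule absolutely_integrable_on_def[THEN iffD1, THEN conjunct1])
  have Fnn: "F t \<ge> 0" for t
  proof -
    have "F t = exp (- s0 * t) * (\<phi> t * D t)" by (simp add: F_def)
    then show ?thesis using \<phi>D[of t] by simp
  qed
  have Fcont: "continuous_on {0<..} F"
    unfolding F_def by (intro continuous_intros \<phi>cont cont)
  have Ft0: "F t0 > 0" using \<phi>t0 r Dt0 by (simp add: F_def)
  obtain d2 where d2: "d2 > 0" "\<And>t. t \<in> {0<..} \<Longrightarrow> dist t t0 < d2 \<Longrightarrow> dist (F t) (F t0) < F t0 / 2"
    using Fcont t0 Ft0 unfolding continuous_on_iff by (metis greaterThan_iff half_gt_zero)
  define \<eta> where "\<eta> = min (d2/2) (t0/2)"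
  have \<eta>: "\<eta> > 0" "\<eta> < t0" "\<eta> < d2" using d2 t0 by (auto simp: \<eta>_def)
  have Fbig: "F t \<ge> F t0 / 2" if "t \<in> {t0 - \<eta>..t0 + \<eta>}" for t
  proof -
    have "t > 0" "dist t t0 < d2" using that \<eta> by (auto simp: dist_real_def)
    then have "dist (F t) (F t0) < F t0 / 2" using d2 by auto
    then have "\<bar>F t - F t0\<bar> < F t0 / 2" by (simp only: dist_real_def)
    then show ?thesis by linarith
  qed
  have "integral {t0 - \<eta>..t0 + \<eta>} (\<lambda>t. F t0 / 2) \<le> integral {t0 - \<eta>..t0 + \<eta>} F"
  proof (rule integral_le)
    show "F integrable_on {t0 - \<eta>..t0 + \<eta>}"
      by (rule integrable_continuous_interval, rule continuous_on_subset[OF Fcont]) (use \<eta> in auto)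
  qed (use Fbig in auto)
  also have "\<dots> \<le> integral {0<..} F"
    by (rule integral_subset_le) (use \<eta> Fnn Fint in \<open>auto intro!: integrable_continuous_interval continuous_on_subset[OF Fcont]\<close>)
  finally have "2 * \<eta> * (F t0 / 2) \<le> integral {0<..} F" using \<eta> by simp
  moreover have "2 * \<eta> * (F t0 / 2) > 0" using \<eta> Ft0 by simp
  ultimately have Ipos: "integral {0<..} F > 0" by linarith
  define A where "A = integral {0<..} (\<lambda>t. norm (exp (- s0 * t) * D t))"
  have nint: "(\<lambda>t. norm (exp (- s0 * t) * D t)) integrable_on {0<..}"
    using ai by (simp add: absolutely_integrable_on_def)
  have A0: "A \<ge> 0" unfolding A_def by (rule integral_nonneg[OF nint]) auto
  have bound: "\<bar>integral {0<..} F\<bar> \<le> \<epsilon> * A" if eps: "\<epsilon> > 0" for \<epsilon>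
  proof -
    have "compact {0..1::real}" by simp
    then obtain g where g: "real_polynomial_function g" "\<And>x. x \<in> {0..1} \<Longrightarrow> \<bar>\<psi> x - g x\<bar> < \<epsilon>"
      by (rule Stone_Weierstrass_real_polynomial_function[of "{0..1}" \<psi> \<epsilon>]) (use \<psi>cont eps in auto)
    then obtain a n where gdef: "g = (\<lambda>x. \<Sum>i\<le>n. a i * x ^ i)"
      using real_polynomial_function_iff_sum by metis
    define P where "P = (\<lambda>t. g (exp (- t)) * (exp (- s0 * t) * D t))"
    have Peq: "P t = (\<Sum>i\<le>n. a i * (exp (- (s0 + real i) * t) * D t))" for t
    proof -
      have "exp (- t) ^ i * exp (- s0 * t) = exp (- (s0 + real i) * t)" for i
        by (simp add: exp_of_nat_mult[symmetric] exp_add[symmetric] algebra_simps)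
      then show ?thesis
        unfolding P_def gdef sum_distrib_right
        by (intro sum.cong refl) (metis (no_types, lifting) mult.assoc mult.commute)
    qed
    have Pint: "(P has_integral 0) {0<..}"
    proof -
      have "((\<lambda>t. \<Sum>i\<le>n. a i * (exp (- (s0 + real i) * t) * D t)) has_integral (\<Sum>i\<le>n. a i * 0)) {0<..}"
        by (intro has_integral_sum has_integral_mult_right z) auto
      then show ?thesis by (simp add: Peq[abs_def])
    qed
    have diffint: "(\<lambda>t. F t - P t) integrable_on {0<..}"
      using Fint Pint by (intro integrable_diff) (auto simp: has_integral_iff)
    have "norm (integral {0<..} (\<lambda>t. F t - P t)) \<le> integral {0<..} (\<lambda>t. \<epsilon> * norm (exp (- s0 * t) * D t))"
    proof (rule integral_norm_bound_integral[OF diffint])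
      show "(\<lambda>t. \<epsilon> * norm (exp (- s0 * t) * D t)) integrable_on {0<..}"
        using integrable_on_cmult_left[OF nint, of \<epsilon>] by simp
      fix t :: real assume t: "t \<in> {0<..}"
      have e1: "exp (- t) \<in> {0..1}" using t by auto
      have "F t - P t = (\<phi> t - g (exp (- t))) * (exp (- s0 * t) * D t)"
        by (simp add: F_def P_def algebra_simps)
      also have "norm \<dots> = \<bar>\<psi> (exp (- t)) - g (exp (- t))\<bar> * norm (exp (- s0 * t) * D t)"
        by (simp add: \<phi>_def abs_mult)
      also have "\<dots> \<le> \<epsilon> * norm (exp (- s0 * t) * D t)"
        using g(2)[OF e1] by (intro mult_right_mono) auto
      finally show "norm (F t - P t) \<le> \<epsilon> * norm (exp (- s0 * t) * D t)" .
    qed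
    moreover have "integral {0<..} (\<lambda>t. F t - P t) = integral {0<..} F"
      using Fint Pint by (subst integral_diff) (auto simp: has_integral_iff)
    moreover have "integral {0<..} (\<lambda>t. \<epsilon> * norm (exp (- s0 * t) * D t)) = \<epsilon> * A"
      by (simp add: A_def)
    ultimately show ?thesis using eps by auto
  qed
  define I where "I = integral {0<..} F"
  have "\<bar>I\<bar> \<le> (I / (A + 1)) * A" using bound[of "I / (A+1)"] Ipos A0 by (simp add: I_def)
  moreover have "(I / (A + 1)) * A < I" using Ipos A0
    by (simp add: I_def field_simps)
  ultimately show False by simp
qed

lemma lerch:
  fixes D :: "real \<Rightarrow> real" and s0 t0 :: real
  assumes cont: "continuous_on {0<..} D"
    and ai: "(\<lambda>t. exp (- s0 * t) * D t) absolutely_integrable_on {0<..}"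
    and z: "\<And>n::nat. ((\<lambda>t. exp (- (s0 + real n) * t) * D t) has_integral 0) {0<..}"
    and t0: "t0 > 0"
  shows "D t0 = 0"
proof (rule ccontr)
  assume ne: "D t0 \<noteq> 0"
  show False
  proof (cases "D t0 > 0")
    case True then show ?thesis using lerch_pos[OF cont ai z t0] by blast
  next
    case False
    then have "(- D) t0 > 0" using ne by simp
    moreover have "continuous_on {0<..} (\<lambda>t. - D t)" using cont by (intro continuous_intros)
    moreover have "(\<lambda>t. exp (- s0 * t) * (- D t)) absolutely_integrable_on {0<..}"
      using absolutely_integrable_scaleR_left[OF ai, where c="-1"] by simp
    moreover have "((\<lambda>t. exp (- (s0 + real n) * t) * (- D t)) has_integral 0) {0<..}" for n
      using has_integral_neg[OF z[of n]] by simp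
    ultimately show False using lerch_pos[of "\<lambda>t. - D t" s0 t0] t0 by auto
  qed
qed



locale andr =
  fixes a b \<alpha> \<sigma> :: real
  assumes a: "a > 0" and b: "b > 0" and \<alpha>0: "\<alpha> > 0" and \<alpha>1: "\<alpha> < 1" and \<sigma>: "\<sigma> > 0"
    and q: "a * \<sigma> powr (- \<alpha>) + b / \<sigma> \<le> 1/2"
begin

definition q where "q = a * \<sigma> powr (- \<alpha>) + b / \<sigma>"

lemma q_pos: "q > 0" and q_half: "q \<le> 1/2"
  using a b \<sigma> q by (auto simp: q_def intro!: add_pos_pos)

definition ex :: "nat \<Rightarrow> nat \<Rightarrow> real" where "ex n k = \<alpha> * real k + real (n - k)"

definition trm :: "nat \<Rightarrow> real \<Rightarrow> real" where
  "trm n t = (-1)^n * (\<Sum>k\<le>n. real (n choose k) * a^k * b^(n-k) * (t powr ex n k / Gamma (ex n k + 1)))"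

lemma ex_nonneg: "ex n k \<ge> 0" using \<alpha>0 by (simp add: ex_def)

lemma powr_ex: "x > 0 \<Longrightarrow> k \<le> n \<Longrightarrow> x powr (- ex n k) = (x powr (- \<alpha>))^k * (1/x)^(n-k)"
  by (simp add: ex_def powr_add powr_minus powr_realpow[symmetric] powr_powr[symmetric] 
      field_simps powr_diff)

lemma binom_sum: "(\<Sum>k\<le>n. real (n choose k) * a^k * b^(n-k) * x powr (- ex n k)) = (a * x powr (- \<alpha>) + b / x)^n"
  if "x > 0" for x
proof -
  have "(a * x powr (- \<alpha>) + b / x)^n = (\<Sum>k\<le>n. real (n choose k) * (a * x powr (- \<alpha>))^k * (b/x)^(n-k))"
    by (rule binomial_ring)
  also have "\<dots> = (\<Sum>k\<le>n. real (n choose k) * a^k * b^(n-k) * x powr (- ex n k))"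
    using that by (intro sum.cong refl) (simp add: powr_ex power_mult_distrib power_divide field_simps)
  finally show ?thesis ..
qed

lemma trm_bound:
  assumes t: "t > 0"
  shows "\<bar>trm n t\<bar> \<le> exp 1 * exp (\<sigma> * t) * q^n"
proof -
  have "\<bar>trm n t\<bar> = \<bar>\<Sum>k\<le>n. real (n choose k) * a^k * b^(n-k) * (t powr ex n k / Gamma (ex n k + 1))\<bar>"
    by (simp add: trm_def abs_mult)
  also have "\<dots> \<le> (\<Sum>k\<le>n. real (n choose k) * a^k * b^(n-k) * (exp 1 * exp (\<sigma> * t) * \<sigma> powr (- ex n k)))"
  proof -
    have nn: "0 \<le> real (n choose k) * a^k * b^(n-k) * (t powr ex n k / Gamma (ex n k + 1))" for k
      using a b ex_nonneg[of n k] by (intro mult_nonneg_nonneg divide_nonneg_nonneg Gamma_real_nonneg) auto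
    have "\<bar>\<Sum>k\<le>n. real (n choose k) * a^k * b^(n-k) * (t powr ex n k / Gamma (ex n k + 1))\<bar>
          = (\<Sum>k\<le>n. real (n choose k) * a^k * b^(n-k) * (t powr ex n k / Gamma (ex n k + 1)))"
      using nn by (intro abs_of_nonneg sum_nonneg) auto
    also have "\<dots> \<le> (\<Sum>k\<le>n. real (n choose k) * a^k * b^(n-k) * (exp 1 * exp (\<sigma> * t) * \<sigma> powr (- ex n k)))"
      using a b t \<sigma> ex_nonneg by (intro sum_mono mult_left_mono term_bound) auto
    finally show ?thesis .
  qed
  also have "\<dots> = exp 1 * exp (\<sigma> * t) * (\<Sum>k\<le>n. real (n choose k) * a^k * b^(n-k) * \<sigma> powr (- ex n k))"
    by (simp add: sum_distrib_left algebra_simps)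
  also have "\<dots> = exp 1 * exp (\<sigma> * t) * q^n"
    using binom_sum[OF \<sigma>] by (simp add: q_def)
  finally show ?thesis .
qed

lemma trm_bound2:
  assumes t: "t > 0" "t \<le> 1" and n: "n \<ge> 2"
  shows "\<bar>trm n t\<bar> \<le> exp 1 * exp \<sigma> * q^n * t powr (2 * \<alpha>)"
proof -
  have "\<bar>trm n t\<bar> = \<bar>\<Sum>k\<le>n. real (n choose k) * a^k * b^(n-k) * (t powr ex n k / Gamma (ex n k + 1))\<bar>"
    by (simp add: trm_def abs_mult)
  also have "\<dots> \<le> (\<Sum>k\<le>n. real (n choose k) * a^k * b^(n-k) * (t powr (2 * \<alpha>) * (exp 1 * exp \<sigma> * \<sigma> powr (- ex n k))))"
  proof -
    have nn: "0 \<le> real (n choose k) * a^k * b^(n-k) * (t powr ex n k / Gamma (ex n k + 1))" for k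
      using a b ex_nonneg[of n k] by (intro mult_nonneg_nonneg divide_nonneg_nonneg Gamma_real_nonneg) auto
    have "\<bar>\<Sum>k\<le>n. real (n choose k) * a^k * b^(n-k) * (t powr ex n k / Gamma (ex n k + 1))\<bar>
          = (\<Sum>k\<le>n. real (n choose k) * a^k * b^(n-k) * (t powr ex n k / Gamma (ex n k + 1)))"
      using nn by (intro abs_of_nonneg sum_nonneg) auto
    also have "\<dots> \<le> (\<Sum>k\<le>n. real (n choose k) * a^k * b^(n-k) * (t powr (2 * \<alpha>) * (exp 1 * exp \<sigma> * \<sigma> powr (- ex n k))))"
    proof (intro sum_mono mult_left_mono)
      fix k assume k: "k \<in> {..n}"
      have g: "Gamma (ex n k + 1) > 0" using ex_nonneg[of n k] by (intro Gamma_real_pos) auto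
      have "ex n k \<ge> \<alpha> * real n"
      proof -
        have "real (n - k) \<ge> \<alpha> * real (n - k)" using \<alpha>1 \<alpha>0 by (intro mult_left_le_one_le) auto
        then show ?thesis using k by (simp add: ex_def of_nat_diff algebra_simps)
      qed
      moreover have "\<alpha> * real n \<ge> 2 * \<alpha>" using n \<alpha>0 by simp
      ultimately have e: "ex n k \<ge> 2 * \<alpha>" by linarith
      have p: "t powr ex n k \<le> t powr (2 * \<alpha>)" using t e by (intro powr_mono') auto
      have "1 powr ex n k / Gamma (ex n k + 1) \<le> exp 1 * exp (\<sigma> * 1) * \<sigma> powr (- ex n k)"
        using \<sigma> ex_nonneg by (intro term_bound) auto
      then have iq: "1 / Gamma (ex n k + 1) \<le> exp 1 * exp \<sigma> * \<sigma> powr (- ex n k)" by simp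
      have "t powr ex n k / Gamma (ex n k + 1) = t powr ex n k * (1 / Gamma (ex n k + 1))" by simp
      also have "\<dots> \<le> t powr (2 * \<alpha>) * (exp 1 * exp \<sigma> * \<sigma> powr (- ex n k))"
        using p iq g by (intro mult_mono) auto
      finally show "t powr ex n k / Gamma (ex n k + 1) \<le> t powr (2 * \<alpha>) * (exp 1 * exp \<sigma> * \<sigma> powr (- ex n k))" .
    qed (use a b in auto)
    finally show ?thesis .
  qed
  also have "\<dots> = exp 1 * exp \<sigma> * t powr (2 * \<alpha>) * (\<Sum>k\<le>n. real (n choose k) * a^k * b^(n-k) * \<sigma> powr (- ex n k))"
    by (simp add: sum_distrib_left algebra_simps)
  also have "\<dots> = exp 1 * exp \<sigma> * q^n * t powr (2 * \<alpha>)"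
    using binom_sum[OF \<sigma>] by (simp add: q_def)
  finally show ?thesis .
qed

lemma trm0: "t > 0 \<Longrightarrow> trm 0 t = 1"
  by (simp add: trm_def ex_def)

lemma trm1: "t > 0 \<Longrightarrow> trm 1 t = - (b * t + a * t powr \<alpha> / Gamma (\<alpha> + 1))"
proof -
  assume t: "t > 0"
  have G2: "Gamma (2::real) = 1" using Gamma_fact[of 1] by simp
  show ?thesis using t by (simp add: trm_def ex_def G2 add.commute)
qed

lemma q_lt1: "norm q < 1" using q_pos q_half by simp

lemma summable_q: "summable (\<lambda>n. c * q^n)"
  using summable_geometric[OF q_lt1] by (rule summable_mult)

lemma summable_trm: "t > 0 \<Longrightarrow> summable (\<lambda>n. trm n t)"
  by (rule summable_comparison_test'[OF summable_q[of "exp 1 * exp (\<sigma> * t)"], of 0])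
     (use trm_bound in auto)

definition H :: "real \<Rightarrow> real" where "H t = (\<Sum>n. trm n t)"

lemma gp_bound: "(\<Sum>i<N. q^i) \<le> 2"
proof -
  have "(\<Sum>i<N. q^i) = (1 - q^N) / (1 - q)" using q_half by (simp add: sum_gp_strict)
  also have "\<dots> \<le> 1 / (1 - q)" using q_half q_pos by (intro divide_right_mono) auto
  also have "\<dots> \<le> 2" using q_half by (simp add: field_simps)
  finally show ?thesis .
qed

lemma partial_bound: "t > 0 \<Longrightarrow> \<bar>\<Sum>n<N. trm n t\<bar> \<le> 2 * exp 1 * exp (\<sigma> * t)"
proof -
  assume t: "t > 0"
  have "\<bar>\<Sum>n<N. trm n t\<bar> \<le> (\<Sum>n<N. \<bar>trm n t\<bar>)" by (rule sum_abs)
  also have "\<dots> \<le> (\<Sum>n<N. exp 1 * exp (\<sigma> * t) * q^n)" using trm_bound[OF t] by (intro sum_mono) auto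
  also have "\<dots> = exp 1 * exp (\<sigma> * t) * (\<Sum>n<N. q^n)" by (simp add: sum_distrib_left)
  also have "\<dots> \<le> exp 1 * exp (\<sigma> * t) * 2" using gp_bound by (intro mult_left_mono) auto
  finally show ?thesis by simp
qed

lemma H_bound: "t > 0 \<Longrightarrow> \<bar>H t\<bar> \<le> 2 * exp 1 * exp (\<sigma> * t)"
proof -
  assume t: "t > 0"
  have "(\<lambda>N. \<bar>\<Sum>n<N. trm n t\<bar>) \<longlonglongrightarrow> \<bar>H t\<bar>"
    unfolding H_def by (intro tendsto_rabs summable_LIMSEQ summable_trm t)
  then show ?thesis
    by (rule tendsto_upperbound) (use partial_bound[OF t] in auto)
qed

lemma trm_cont: "continuous_on {0<..} (trm n)"
proof -
  have "Gamma (ex n k + 1) \<noteq> 0" for k proof -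
    have "Gamma (ex n k + 1) > 0" using ex_nonneg[of n k] by (intro Gamma_real_pos) auto
    then show ?thesis by simp
  qed
  then show ?thesis unfolding trm_def by (intro continuous_intros) auto
qed

lemma H_cont: "continuous_on {0<..} H"
proof -
  have "isCont H t" if t: "t > 0" for t
  proof -
    have ul: "uniform_limit {0<..<t+1} (\<lambda>N x. \<Sum>i<N. trm i x) (\<lambda>x. \<Sum>i. trm i x) sequentially"
    proof (rule Weierstrass_m_test[OF _ summable_q[of "exp 1 * exp (\<sigma> * (t+1))"]])
      fix n x assume x: "x \<in> {0<..<t+1}"
      have "norm (trm n x) \<le> exp 1 * exp (\<sigma> * x) * q^n" using trm_bound x by auto
      also have "\<dots> \<le> exp 1 * exp (\<sigma> * (t+1)) * q^n"
        using x \<sigma> q_pos by (intro mult_right_mono mult_left_mono) (auto intro: mult_left_mono)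
      finally show "norm (trm n x) \<le> exp 1 * exp (\<sigma> * (t+1)) * q^n" .
    qed
    have "continuous_on {0<..<t+1} (\<lambda>x. \<Sum>i. trm i x)"
    proof (rule uniform_limit_theorem[OF _ ul])
      show "\<forall>\<^sub>F n in sequentially. continuous_on {0<..<t+1} (\<lambda>x. \<Sum>i<n. trm i x)"
        by (intro always_eventually allI continuous_on_sum continuous_on_subset[OF trm_cont]) auto
    qed simp
    then have "continuous_on {0<..<t+1} H" by (simp add: H_def[abs_def])
    then show ?thesis using t by (subst (asm) continuous_on_eq_continuous_at) auto
  qed
  then show ?thesis by (intro continuous_at_imp_continuous_on) auto
qed

definition Q :: "real \<Rightarrow> real" where "Q s = a * s powr (- \<alpha>) + b / s"

lemma laplace_trm:
  assumes s: "s > 0"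
  shows "((\<lambda>t. exp (- s * t) * trm n t) has_integral ((-1)^n / s * Q s ^ n)) {0<..}"
proof -
  define c where "c k = real (n choose k) * a^k * b^(n-k) / Gamma (ex n k + 1)" for k
  have g: "Gamma (ex n k + 1) > 0" for k using ex_nonneg[of n k] by (intro Gamma_real_pos) auto
  have each: "((\<lambda>t. c k * (exp (- s * t) * t powr ex n k)) has_integral
        (c k * (Gamma (ex n k + 1) / s powr (ex n k + 1)))) {0<..}" for k
    by (intro has_integral_mult_right laplace_powr) (use s ex_nonneg[of n k] in auto)
  have "((\<lambda>t. (-1)^n * (\<Sum>k\<le>n. c k * (exp (- s * t) * t powr ex n k))) has_integral
        ((-1)^n * (\<Sum>k\<le>n. c k * (Gamma (ex n k + 1) / s powr (ex n k + 1))))) {0<..}"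
    by (intro has_integral_mult_right has_integral_sum each) auto
  moreover have "(\<lambda>t. (-1)^n * (\<Sum>k\<le>n. c k * (exp (- s * t) * t powr ex n k))) = (\<lambda>t. exp (- s * t) * trm n t)"
    by (rule ext) (simp add: trm_def c_def sum_distrib_left algebra_simps)
  moreover have "(\<Sum>k\<le>n. c k * (Gamma (ex n k + 1) / s powr (ex n k + 1))) =
      1 / s * (\<Sum>k\<le>n. real (n choose k) * a^k * b^(n-k) * s powr (- ex n k))"
    unfolding sum_distrib_left
  proof (intro sum.cong refl)
    fix k
    have "s powr (ex n k + 1) = s * s powr ex n k" using s by (simp add: powr_add)
    then show "c k * (Gamma (ex n k + 1) / s powr (ex n k + 1)) =
        1 / s * (real (n choose k) * a ^ k * b ^ (n - k) * s powr - ex n k)"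
      using g[of k] s by (simp add: c_def powr_minus field_simps)
  qed
  ultimately show ?thesis using binom_sum[OF s] by (simp add: Q_def)
qed

lemma laplace_H:
  assumes s: "s > \<sigma>"
  shows "(\<lambda>t. exp (- s * t) * H t) absolutely_integrable_on {0<..}"
    "((\<lambda>t. exp (- s * t) * H t) has_integral (1 / (s + a * s powr (1 - \<alpha>) + b))) {0<..}"
proof -
  have s0: "s > 0" using s \<sigma> by simp
  have "a * s powr (- \<alpha>) \<le> a * \<sigma> powr (- \<alpha>)"
    using a \<alpha>0 \<sigma> s by (intro mult_left_mono powr_mono2') auto
  moreover have "b / s \<le> b / \<sigma>" using b \<sigma> s by (intro divide_left_mono) auto
  ultimately have Qq: "Q s \<le> q" by (simp add: Q_def q_def)
  have Qpos: "Q s > 0" using a b s0 by (simp add: Q_def add_pos_pos)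
  define h where "h t = 2 * exp 1 * exp (- (s - \<sigma>) * t)" for t
  have hi: "h integrable_on {0<..}"
  proof -
    have "((\<lambda>t. exp (- (s - \<sigma>) * t) * t powr 0) has_integral (Gamma (0 + 1) / (s - \<sigma>) powr (0 + 1))) {0<..}"
      using s by (intro laplace_powr) auto
    then have "(\<lambda>t. exp (- (s - \<sigma>) * t)) integrable_on {0<..}"
      by (subst integrable_cong[where g = "\<lambda>t. exp (- (s - \<sigma>) * t) * t powr 0"]) (auto simp: integrable_on_def)
    from integrable_on_cmult_left[OF this, of "2 * exp 1"] show ?thesis unfolding h_def by (simp add: mult.assoc)
  qed
  define f where "f N t = (\<Sum>n<N. exp (- s * t) * trm n t)" for N t
  have fi: "(f N has_integral (\<Sum>n<N. (-1)^n / s * Q s ^ n)) {0<..}" for N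
    unfolding f_def[abs_def] by (intro has_integral_sum laplace_trm s0) auto
  have fle: "norm (f N t) \<le> h t" if t: "t \<in> {0<..}" for N t
  proof -
    have "f N t = exp (- s * t) * (\<Sum>n<N. trm n t)" by (simp add: f_def sum_distrib_left)
    then have "norm (f N t) = exp (- s * t) * \<bar>\<Sum>n<N. trm n t\<bar>" by (simp add: abs_mult)
    also have "\<dots> \<le> exp (- s * t) * (2 * exp 1 * exp (\<sigma> * t))"
      using partial_bound t by (intro mult_left_mono) auto
    also have "\<dots> = h t" by (simp add: h_def mult_exp_exp algebra_simps)
    finally show ?thesis .
  qed
  have fconv: "(\<lambda>N. f N t) \<longlonglongrightarrow> exp (- s * t) * H t" if t: "t \<in> {0<..}" for t
  proof -
    have "(\<lambda>N. exp (- s * t) * (\<Sum>n<N. trm n t)) \<longlonglongrightarrow> exp (- s * t) * H t"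
      unfolding H_def using t by (intro tendsto_mult_left summable_LIMSEQ summable_trm) auto
    then show ?thesis by (simp add: f_def sum_distrib_left)
  qed
  have dc: "(\<lambda>t. exp (- s * t) * H t) integrable_on {0<..}"
    "(\<lambda>N. integral {0<..} (f N)) \<longlonglongrightarrow> integral {0<..} (\<lambda>t. exp (- s * t) * H t)"
    using dominated_convergence[of f "{0<..}" h "\<lambda>t. exp (- s * t) * H t"] fi hi fle fconv
    by (auto simp: has_integral_iff)
  have "(\<lambda>n. 1 / s * (- Q s)^n) sums (1 / s * (1 / (1 - (- Q s))))"
    using Qq Qpos q_half by (intro sums_mult geometric_sums) auto
  moreover have "(\<lambda>n. 1 / s * (- Q s)^n) = (\<lambda>n. (-1)^n / s * Q s ^ n)"
    by (rule ext, subst power_minus) simp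
  ultimately have "(\<lambda>n. (-1)^n / s * Q s ^ n) sums (1 / s * (1 / (1 + Q s)))"
    by (metis diff_minus_eq_add)
  then have "(\<lambda>N. \<Sum>n<N. (-1)^n / s * Q s ^ n) \<longlonglongrightarrow> 1 / s * (1 / (1 + Q s))"
    unfolding sums_def .
  moreover have "(\<lambda>N. integral {0<..} (f N)) = (\<lambda>N. \<Sum>n<N. (-1)^n / s * Q s ^ n)"
    using fi by (auto simp: has_integral_iff)
  ultimately have lim: "integral {0<..} (\<lambda>t. exp (- s * t) * H t) = 1 / s * (1 / (1 + Q s))"
    using dc(2) LIMSEQ_unique by metis
  have p1: "s powr (1 - \<alpha>) = s * s powr (- \<alpha>)"
    using s0 powr_add[of s 1 "- \<alpha>"] by simp
  have p2: "s * (b / s) = b" using s0 by simp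
  have "s * (1 + Q s) = s + a * s powr (1 - \<alpha>) + b"
    unfolding Q_def p1 distrib_left p2 by (simp add: algebra_simps)
  moreover have "1 / s * (1 / (1 + Q s)) = 1 / (s * (1 + Q s))" by simp
  ultimately have "1 / s * (1 / (1 + Q s)) = 1 / (s + a * s powr (1 - \<alpha>) + b)"
    by simp
  then show "((\<lambda>t. exp (- s * t) * H t) has_integral (1 / (s + a * s powr (1 - \<alpha>) + b))) {0<..}"
    using dc(1) lim by (simp add: has_integral_iff)
  show "(\<lambda>t. exp (- s * t) * H t) absolutely_integrable_on {0<..}"
  proof (rule absolutely_integrable_integrable_bound[OF _ dc(1) hi])
    fix t :: real assume t: "t \<in> {0<..}"
    have "(\<lambda>N. norm (f N t)) \<longlonglongrightarrow> norm (exp (- s * t) * H t)"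
      by (intro tendsto_norm fconv t)
    then show "norm (exp (- s * t) * H t) \<le> h t"
      by (rule tendsto_upperbound) (use fle[OF t] in auto)
  qed
qed

lemma H_asym:
  assumes t: "t > 0" "t \<le> 1"
  shows "\<bar>H t - (1 - b * t - a * t powr \<alpha> / Gamma (\<alpha> + 1))\<bar> \<le> 2 * exp 1 * exp \<sigma> * t powr (2 * \<alpha>)"
proof -
  have sm: "summable (\<lambda>n. trm n t)" using summable_trm t by auto
  have split: "H t = (\<Sum>n. trm (n + 2) t) + (\<Sum>i<2. trm i t)"
    unfolding H_def by (rule suminf_split_initial_segment[OF sm])
  have two: "(\<Sum>i<2. trm i t) = 1 - b * t - a * t powr \<alpha> / Gamma (\<alpha> + 1)"
    using t trm1[of t] by (simp add: numeral_2_eq_2 trm0)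
  have sm2: "summable (\<lambda>n. trm (n + 2) t)" using sm by (rule summable_ignore_initial_segment)
  have pb: "\<bar>\<Sum>n<N. trm (n + 2) t\<bar> \<le> 2 * exp 1 * exp \<sigma> * t powr (2 * \<alpha>)" for N
  proof -
    have "\<bar>\<Sum>n<N. trm (n + 2) t\<bar> \<le> (\<Sum>n<N. \<bar>trm (n + 2) t\<bar>)" by (rule sum_abs)
    also have "\<dots> \<le> (\<Sum>n<N. exp 1 * exp \<sigma> * t powr (2 * \<alpha>) * q^n)"
    proof (intro sum_mono)
      fix n
      have "\<bar>trm (n + 2) t\<bar> \<le> exp 1 * exp \<sigma> * q^(n+2) * t powr (2 * \<alpha>)"
        using t by (intro trm_bound2) auto
      also have "q^(n+2) \<le> q^n" using q_pos q_half by (intro power_decreasing) auto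
      then have "(exp 1 * exp \<sigma> * t powr (2 * \<alpha>)) * q^(n+2) \<le> (exp 1 * exp \<sigma> * t powr (2 * \<alpha>)) * q^n"
        by (intro mult_left_mono) auto
      then have "exp 1 * exp \<sigma> * q^(n+2) * t powr (2 * \<alpha>) \<le> exp 1 * exp \<sigma> * t powr (2 * \<alpha>) * q^n"
        by (simp only: mult_ac)
      finally show "\<bar>trm (n + 2) t\<bar> \<le> exp 1 * exp \<sigma> * t powr (2 * \<alpha>) * q^n" .
    qed
    also have "\<dots> = exp 1 * exp \<sigma> * t powr (2 * \<alpha>) * (\<Sum>n<N. q^n)" by (simp add: sum_distrib_left)
    also have "\<dots> \<le> exp 1 * exp \<sigma> * t powr (2 * \<alpha>) * 2" using gp_bound by (intro mult_left_mono) auto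
    finally show ?thesis by simp
  qed
  have "(\<lambda>N. \<bar>\<Sum>n<N. trm (n + 2) t\<bar>) \<longlonglongrightarrow> \<bar>\<Sum>n. trm (n + 2) t\<bar>"
    by (intro tendsto_rabs summable_LIMSEQ sm2)
  then have "\<bar>\<Sum>n. trm (n + 2) t\<bar> \<le> 2 * exp 1 * exp \<sigma> * t powr (2 * \<alpha>)"
    by (rule tendsto_upperbound) (use pb in auto)
  then show ?thesis using split two by simp
qed

end

lemma asym_p1: "0 < \<alpha> \<Longrightarrow> \<alpha> < 1 \<Longrightarrow> \<tau> > 0 \<Longrightarrow>
  (\<lambda>t. t / \<tau>) \<in> o[at_right 0](\<lambda>t::real. (t / \<tau>) powr \<alpha>)"
  by real_asymp

lemma asym_p2: "0 < \<alpha> \<Longrightarrow> \<tau> > 0 \<Longrightarrow>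
  (\<lambda>t. (K::real) * t powr (2 * \<alpha>)) \<in> o[at_right 0](\<lambda>t::real. (t / \<tau>) powr \<alpha>)"
  by real_asymp

lemma asym_l: "0 < \<alpha> \<Longrightarrow> ((\<lambda>t::real. t powr \<alpha>) \<longlongrightarrow> 0) (at_right 0)"
  by real_asymp

theorem mainTheorem3:
  fixes \<mu> \<tau> \<alpha> :: real and G :: "real \<Rightarrow> real"
  assumes "\<mu> > 0" and "\<tau> > 0" and "0 < \<alpha>" and "\<alpha> < 1"
    and "continuous_on {0<..} G"
    and "\<And>s. s > 0 \<Longrightarrow>
           has_laplace G s (\<mu> * \<tau> / (s * \<tau> + Gamma (\<alpha> + 1) * (s * \<tau>) powr (1 - \<alpha>) + 1))"
  shows "(G \<longlongrightarrow> \<mu>) (at_right 0) \<and>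
      (\<lambda>t. G t - \<mu> * (1 - (t / \<tau>) powr \<alpha>)) \<in> o[at_right 0](\<lambda>t. (t / \<tau>) powr \<alpha>)"
proof -
  note \<mu> = assms(1) and \<tau> = assms(2) and \<alpha>0 = assms(3) and \<alpha>1 = assms(4)
    and Gc = assms(5) and GL = assms(6)
  define c where "c = Gamma (\<alpha> + 1)"
  have c: "c > 0" unfolding c_def using \<alpha>0 by (intro Gamma_real_pos) auto
  define a where "a = c * \<tau> powr (- \<alpha>)"
  define b where "b = 1 / \<tau>"
  have a: "a > 0" using c \<tau> by (simp add: a_def)
  have b: "b > 0" using \<tau> by (simp add: b_def)
  define \<sigma> where "\<sigma> = max 1 (max ((4 * a) powr (1 / \<alpha>)) (4 * b))"
  have \<sigma>: "\<sigma> > 0" by (simp add: \<sigma>_def)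
  have "\<sigma> powr \<alpha> \<ge> ((4 * a) powr (1 / \<alpha>)) powr \<alpha>"
    using a \<alpha>0 by (intro powr_mono2) (auto simp: \<sigma>_def)
  also have "((4 * a) powr (1 / \<alpha>)) powr \<alpha> = 4 * a"
    using a \<alpha>0 by (simp add: powr_powr)
  finally have s1: "\<sigma> powr \<alpha> \<ge> 4 * a" .
  have "a * \<sigma> powr (- \<alpha>) = a / \<sigma> powr \<alpha>" by (simp add: powr_minus divide_inverse)
  also have "\<dots> \<le> 1/4" using s1 a \<sigma> by (simp add: field_simps)
  finally have q1: "a * \<sigma> powr (- \<alpha>) \<le> 1/4" .
  have q2: "b / \<sigma> \<le> 1/4" using b \<sigma> by (simp add: field_simps \<sigma>_def)
  have q12: "a * \<sigma> powr (- \<alpha>) + b / \<sigma> \<le> 1/2" using q1 q2 by linarith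
  interpret andr a b \<alpha> \<sigma>
    by (rule andr.intro) (use a b \<alpha>0 \<alpha>1 \<sigma> q12 in auto)
  define D where "D t = G t - \<mu> * H t" for t
  have Dc: "continuous_on {0<..} D" unfolding D_def[abs_def]
    by (intro continuous_intros Gc H_cont)
  have lapl: "has_laplace (\<lambda>t. \<mu> * H t) s (\<mu> * \<tau> / (s * \<tau> + Gamma (\<alpha> + 1) * (s * \<tau>) powr (1 - \<alpha>) + 1))"
    if s: "s > \<sigma>" for s
  proof -
    have s0: "s > 0" using s \<sigma> by simp
    have p1: "(s * \<tau>) powr (1 - \<alpha>) = \<tau> * (s powr (1 - \<alpha>) * \<tau> powr (- \<alpha>))"
      using s0 \<tau> powr_add[of \<tau> 1 "- \<alpha>"] by (simp add: powr_mult)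
    have den: "s * \<tau> + Gamma (\<alpha> + 1) * (s * \<tau>) powr (1 - \<alpha>) + 1 = \<tau> * (s + a * s powr (1 - \<alpha>) + b)"
      unfolding p1 using \<tau> by (simp add: a_def b_def c_def algebra_simps)
    have pos: "s + a * s powr (1 - \<alpha>) + b > 0" using s0 a b by (simp add: add_pos_pos)
    have val: "\<mu> * \<tau> / (s * \<tau> + Gamma (\<alpha> + 1) * (s * \<tau>) powr (1 - \<alpha>) + 1) = \<mu> * (1 / (s + a * s powr (1 - \<alpha>) + b))"
      unfolding den using \<tau> pos by simp
    have e: "(\<lambda>t. exp (- s * t) * (\<mu> * H t)) = (\<lambda>t. \<mu> * (exp (- s * t) * H t))"
      by (simp add: algebra_simps)
    show ?thesis unfolding has_laplace_def e val
      using has_integral_mult_right[OF laplace_H(2)[OF s], of \<mu>]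
        absolutely_integrable_scaleR_left[OF laplace_H(1)[OF s], where c=\<mu>]
      by simp
  qed
  have Dz: "((\<lambda>t. exp (- (\<sigma> + 1 + real n) * t) * D t) has_integral 0) {0<..}" for n :: nat
  proof -
    let ?s = "\<sigma> + 1 + real n"
    have s: "?s > \<sigma>" "?s > 0" using \<sigma> by auto
    have "((\<lambda>t. exp (- ?s * t) * G t - exp (- ?s * t) * (\<mu> * H t)) has_integral
          (\<mu> * \<tau> / (?s * \<tau> + Gamma (\<alpha> + 1) * (?s * \<tau>) powr (1 - \<alpha>) + 1) -
           \<mu> * \<tau> / (?s * \<tau> + Gamma (\<alpha> + 1) * (?s * \<tau>) powr (1 - \<alpha>) + 1))) {0<..}"
      using GL[OF s(2)] lapl[OF s(1)] unfolding has_laplace_def by (intro has_integral_diff) auto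
    then show ?thesis by (simp add: D_def algebra_simps)
  qed
  have Dai: "(\<lambda>t. exp (- (\<sigma> + 1) * t) * D t) absolutely_integrable_on {0<..}"
  proof -
    have s: "\<sigma> + 1 > \<sigma>" "\<sigma> + 1 > 0" using \<sigma> by auto
    have "(\<lambda>t. exp (- (\<sigma> + 1) * t) * G t - exp (- (\<sigma> + 1) * t) * (\<mu> * H t)) absolutely_integrable_on {0<..}"
      using GL[OF s(2)] lapl[OF s(1)] unfolding has_laplace_def by (intro set_integral_diff(1)) auto
    then show ?thesis by (simp add: D_def algebra_simps)
  qed
  have GH: "G t = \<mu> * H t" if t: "t > 0" for t
    using lerch[OF Dc Dai _ t] Dz by (simp add: D_def add.assoc)
  define K where "K = 2 * exp 1 * exp \<sigma>"
  have K: "K > 0" by (simp add: K_def)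
  have key: "\<bar>G t - \<mu> * (1 - (t / \<tau>) powr \<alpha>)\<bar> \<le> \<mu> * (t / \<tau> + K * t powr (2 * \<alpha>))"
    if t: "t > 0" "t \<le> 1" for t
  proof -
    have e1: "a * t powr \<alpha> / Gamma (\<alpha> + 1) = (t / \<tau>) powr \<alpha>"
      using c t \<tau> by (simp add: a_def c_def powr_divide powr_minus field_simps)
    have "G t - \<mu> * (1 - (t / \<tau>) powr \<alpha>) = \<mu> * ((H t - (1 - b * t - a * t powr \<alpha> / Gamma (\<alpha> + 1))) - t / \<tau>)"
      using GH[OF t(1)] e1 by (simp add: b_def algebra_simps)
    then have "\<bar>G t - \<mu> * (1 - (t / \<tau>) powr \<alpha>)\<bar> = \<mu> * \<bar>(H t - (1 - b * t - a * t powr \<alpha> / Gamma (\<alpha> + 1))) - t / \<tau>\<bar>"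
      using \<mu> by (simp add: abs_mult)
    also have "\<dots> \<le> \<mu> * (K * t powr (2 * \<alpha>) + t / \<tau>)"
    proof (intro mult_left_mono)
      have "\<bar>H t - (1 - b * t - a * t powr \<alpha> / Gamma (\<alpha> + 1))\<bar> \<le> K * t powr (2 * \<alpha>)"
        using H_asym[OF t] by (simp add: K_def)
      moreover have "\<bar>t / \<tau>\<bar> = t / \<tau>" using t \<tau> by simp
      ultimately show "\<bar>(H t - (1 - b * t - a * t powr \<alpha> / Gamma (\<alpha> + 1))) - t / \<tau>\<bar> \<le> K * t powr (2 * \<alpha>) + t / \<tau>"
        by (smt (verit, best) abs_triangle_ineq4)
    qed (use \<mu> in auto)
    finally show ?thesis by (simp add: add.commute)
  qed
  have ev: "eventually (\<lambda>t. t > 0 \<and> t \<le> 1) (at_right (0::real))"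
    by (rule eventually_at_rightI[of 0 1]) auto
  have o: "(\<lambda>t. G t - \<mu> * (1 - (t / \<tau>) powr \<alpha>)) \<in> o[at_right 0](\<lambda>t. (t / \<tau>) powr \<alpha>)"
  proof (rule landau_o.smallI)
    fix e :: real assume e: "e > 0"
    have e2: "e / (2 * \<mu>) > 0" using e \<mu> by simp
    have E1: "eventually (\<lambda>t. norm (t / \<tau>) \<le> e / (2 * \<mu>) * norm ((t / \<tau>) powr \<alpha>)) (at_right 0)"
      by (rule landau_o.smallD[OF asym_p1[OF \<alpha>0 \<alpha>1 \<tau>] e2])
    have E2: "eventually (\<lambda>t. norm (K * t powr (2 * \<alpha>)) \<le> e / (2 * \<mu>) * norm ((t / \<tau>) powr \<alpha>)) (at_right 0)"
      by (rule landau_o.smallD[OF asym_p2[OF \<alpha>0 \<tau>] e2])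
    show "eventually (\<lambda>t. norm (G t - \<mu> * (1 - (t / \<tau>) powr \<alpha>)) \<le> e * norm ((t / \<tau>) powr \<alpha>)) (at_right 0)"
      using ev E1 E2
    proof eventually_elim
      case (elim t)
      have n1: "norm (t / \<tau>) = t / \<tau>" using elim \<tau> by simp
      have n2: "norm (K * t powr (2 * \<alpha>)) = K * t powr (2 * \<alpha>)" using K by simp
      have "\<bar>G t - \<mu> * (1 - (t / \<tau>) powr \<alpha>)\<bar> \<le> \<mu> * (t / \<tau> + K * t powr (2 * \<alpha>))"
        using key elim by auto
      also have "\<dots> \<le> \<mu> * (e / (2 * \<mu>) * norm ((t / \<tau>) powr \<alpha>) + e / (2 * \<mu>) * norm ((t / \<tau>) powr \<alpha>))"
        using elim n1 n2 \<mu> by (intro mult_left_mono add_mono) auto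
      also have "\<dots> = e * norm ((t / \<tau>) powr \<alpha>)" using \<mu> by (simp add: field_simps)
      finally show ?case by simp
    qed
  qed
  have l1: "((\<lambda>t::real. t powr \<alpha>) \<longlongrightarrow> 0) (at_right 0)" using asym_l[OF \<alpha>0] .
  have l2: "((\<lambda>t::real. t powr (2 * \<alpha>)) \<longlongrightarrow> 0) (at_right 0)" using asym_l[of "2 * \<alpha>"] \<alpha>0 by simp
  have l3: "((\<lambda>t::real. t) \<longlongrightarrow> 0) (at_right 0)" by real_asymp
  have lim0: "((\<lambda>t. \<mu> * \<tau> powr (- \<alpha>) * t powr \<alpha> + \<mu> * (t / \<tau> + K * t powr (2 * \<alpha>))) \<longlongrightarrow> 0) (at_right 0)"
    using tendsto_add[OF tendsto_mult[OF tendsto_const l1, of "\<mu> * \<tau> powr (- \<alpha>)"]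
        tendsto_mult[OF tendsto_const tendsto_add[OF tendsto_divide[OF l3 tendsto_const, of \<tau>]
          tendsto_mult[OF tendsto_const l2, of K]], of \<mu>]] \<tau>
    by simp
  have "((\<lambda>t. G t - \<mu>) \<longlongrightarrow> 0) (at_right 0)"
  proof (rule Lim_null_comparison[OF _ lim0])
    show "eventually (\<lambda>t. norm (G t - \<mu>) \<le> \<mu> * \<tau> powr (- \<alpha>) * t powr \<alpha> + \<mu> * (t / \<tau> + K * t powr (2 * \<alpha>))) (at_right 0)"
      using ev
    proof eventually_elim
      case (elim t)
      have e1: "(t / \<tau>) powr \<alpha> = \<tau> powr (- \<alpha>) * t powr \<alpha>"
        using elim \<tau> by (simp add: powr_divide powr_minus field_simps)
      have "norm (G t - \<mu>) \<le> \<bar>G t - \<mu> * (1 - (t / \<tau>) powr \<alpha>)\<bar> + \<mu> * (t / \<tau>) powr \<alpha>"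
        using \<mu> by (simp add: algebra_simps) (smt (verit) abs_triangle_ineq4 abs_of_nonneg powr_ge_zero mult_nonneg_nonneg)
      then show ?case using key[of t] elim e1 by (simp add: algebra_simps)
    qed
  qed
  then have "(G \<longlongrightarrow> \<mu>) (at_right 0)" by (simp add: LIM_zero_iff)
  with o show ?thesis by blast
qed

end
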